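(* Every weakly bridged graph is a diamond-weakly modular graph.
   Context: All graphs are finite, simple and connected; $d$ denotes the shortest-path distance. A diamond is $K_4$ minus one edge. Triangle condition $(TC)$: for any three vertices $u,v,w$ with $1=d(v,w)<d(v,u)=d(u,w)$ there is a common neighbor $z$ of $v,w$ with $d(u,z)=d(u,v)-1$. Quadrangle condition $(QC)$: for any four vertices $u,v,w,y$ with $d(v,y)=d(w,y)=1$ and $2=d(v,w)\le d(u,v)=d(u,w)=d(u,y)-1$, there exists a common neighbor $z$ of $v$ and $w$ with $d(u,z)=d(u,v)-1$. A graph is weakly modular if it satisfies $(TC)$ and $(QC)$; it is weakly bridged if it is weakly modular and has no induced cycle of length four. Triangle diamond condition $(TDC)$: for any three vertices $u,v,w$ with $1=d(v,w)<d(u,v)=d(u,w)$, there exists a common neighbor $z$ of $v$ and $w$ with $d(u,z)=d(u,v)-1$ such that $z$ is adjacent to every vertex $x$ with $d(x,v)=1$, $d(u,x)=d(u,v)-1$ and to every vertex $y$ with $d(y,w)=1$, $d(u,y)=d(u,w)-1$ (so that $v,w,z$ form diamonds with such $x$ and $y$). A graph is diamond-weakly modular if it satisfies $(QC)$ and $(TDC)$. *)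

theory Defs
  imports Main
begin

inductive walk :: "('a \<Rightarrow> 'a \<Rightarrow> bool) \<Rightarrow> 'a \<Rightarrow> nat \<Rightarrow> 'a \<Rightarrow> bool" for E where
  walk_nil: "walk E x 0 x"
| walk_step: "E x y \<Longrightarrow> walk E y n z \<Longrightarrow> walk E x (Suc n) z"

definition graph :: "'a set \<Rightarrow> ('a \<Rightarrow> 'a \<Rightarrow> bool) \<Rightarrow> bool" where
  "graph V E \<longleftrightarrow> finite V \<and> V \<noteq> {} \<and>
     (\<forall>x y. E x y \<longrightarrow> x \<in> V \<and> y \<in> V) \<and>
     (\<forall>x y. E x y \<longrightarrow> E y x) \<and> (\<forall>x. \<not> E x x) \<and>
     (\<forall>x\<in>V. \<forall>y\<in>V. \<exists>n. walk E x n y)"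

definition dist :: "('a \<Rightarrow> 'a \<Rightarrow> bool) \<Rightarrow> 'a \<Rightarrow> 'a \<Rightarrow> nat" where
  "dist E x y = (LEAST n. walk E x n y)"

definition TC :: "'a set \<Rightarrow> ('a \<Rightarrow> 'a \<Rightarrow> bool) \<Rightarrow> bool" where
  "TC V E \<longleftrightarrow> (\<forall>u\<in>V. \<forall>v\<in>V. \<forall>w\<in>V.
     1 = dist E v w \<and> dist E v w < dist E v u \<and> dist E v u = dist E u w \<longrightarrow>
     (\<exists>z\<in>V. E z v \<and> E z w \<and> dist E u z = dist E u v - 1))"

definition QC :: "'a set \<Rightarrow> ('a \<Rightarrow> 'a \<Rightarrow> bool) \<Rightarrow> bool" where
  "QC V E \<longleftrightarrow> (\<forall>u\<in>V. \<forall>v\<in>V. \<forall>w\<in>V. \<forall>y\<in>V.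
     dist E v y = 1 \<and> dist E w y = 1 \<and> 2 = dist E v w \<and> dist E v w \<le> dist E u v \<and>
     dist E u v = dist E u w \<and> dist E u w = dist E u y - 1 \<longrightarrow>
     (\<exists>z\<in>V. E z v \<and> E z w \<and> dist E u z = dist E u v - 1))"

definition weakly_modular :: "'a set \<Rightarrow> ('a \<Rightarrow> 'a \<Rightarrow> bool) \<Rightarrow> bool" where
  "weakly_modular V E \<longleftrightarrow> TC V E \<and> QC V E"

definition induced_C4_free :: "'a set \<Rightarrow> ('a \<Rightarrow> 'a \<Rightarrow> bool) \<Rightarrow> bool" where
  "induced_C4_free V E \<longleftrightarrow> \<not> (\<exists>a\<in>V. \<exists>b\<in>V. \<exists>c\<in>V. \<exists>d\<in>V.
     distinct [a, b, c, d] \<and> E a b \<and> E b c \<and> E c d \<and> E d a \<and> \<not> E a c \<and> \<not> E b d)"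

definition weakly_bridged :: "'a set \<Rightarrow> ('a \<Rightarrow> 'a \<Rightarrow> bool) \<Rightarrow> bool" where
  "weakly_bridged V E \<longleftrightarrow> weakly_modular V E \<and> induced_C4_free V E"

definition TDC :: "'a set \<Rightarrow> ('a \<Rightarrow> 'a \<Rightarrow> bool) \<Rightarrow> bool" where
  "TDC V E \<longleftrightarrow> (\<forall>u\<in>V. \<forall>v\<in>V. \<forall>w\<in>V.
     1 = dist E v w \<and> dist E v w < dist E u v \<and> dist E u v = dist E u w \<longrightarrow>
     (\<exists>z\<in>V. E z v \<and> E z w \<and> dist E u z = dist E u v - 1 \<and>
        (\<forall>x\<in>V. dist E x v = 1 \<and> dist E u x = dist E u v - 1 \<longrightarrow> x = z \<or> E z x) \<and>
        (\<forall>y\<in>V. dist E y w = 1 \<and> dist E u y = dist E u w - 1 \<longrightarrow> y = z \<or> E z y)))"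

definition diamond_weakly_modular :: "'a set \<Rightarrow> ('a \<Rightarrow> 'a \<Rightarrow> bool) \<Rightarrow> bool" where
  "diamond_weakly_modular V E \<longleftrightarrow> QC V E \<and> TDC V E"

end

theory Submission
  imports Defs
begin

lemma walk_edge: "E x y \<Longrightarrow> walk E x 1 y"
  using walk.walk_step[OF _ walk.walk_nil, of E x y] by simp

lemma walk_append: "walk E x m y \<Longrightarrow> walk E y n z \<Longrightarrow> walk E x (m+n) z"
  by (induction rule: walk.induct) (auto intro: walk.intros)

lemma walk_rev:
  assumes s: "\<forall>x y. E x y \<longrightarrow> E y x"
  shows "walk E x n y \<Longrightarrow> walk E y n x"
proof (induction rule: walk.induct)
  case (walk_nil x) then show ?case by (rule walk.walk_nil)
next
  case (walk_step x y n z)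
  have "E y x" using s walk_step(1) by blast
  then have "walk E y 1 x" by (rule walk_edge)
  from walk_append[OF walk_step(3) this] show ?case by simp
qed

lemma dist_walk: "walk E x n y \<Longrightarrow> walk E x (dist E x y) y \<and> dist E x y \<le> n"
proof -
  assume w: "walk E x n y"
  have "walk E x (LEAST n. walk E x n y) y" using w by (rule LeastI)
  moreover have "(LEAST n. walk E x n y) \<le> n" using w by (rule Least_le)
  ultimately show ?thesis unfolding dist_def by (rule conjI)
qed

lemma conn: "graph V E \<Longrightarrow> x \<in> V \<Longrightarrow> y \<in> V \<Longrightarrow> \<exists>n. walk E x n y"
  unfolding graph_def by blast

lemma dist_sym: "graph V E \<Longrightarrow> x \<in> V \<Longrightarrow> y \<in> V \<Longrightarrow> dist E x y = dist E y x"
proof -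
  assume g: "graph V E" "x \<in> V" "y \<in> V"
  have s: "\<forall>x y. E x y \<longrightarrow> E y x" using g unfolding graph_def by blast
  obtain n where n: "walk E x n y" using conn[OF g(1) g(2) g(3)] by blast
  obtain m where m: "walk E y m x" using conn[OF g(1) g(3) g(2)] by blast
  have a: "walk E x (dist E x y) y" "walk E y (dist E y x) x"
    using conjunct1[OF dist_walk[OF n]] conjunct1[OF dist_walk[OF m]] by auto
  have "dist E y x \<le> dist E x y" using conjunct2[OF dist_walk[OF walk_rev[OF s a(1)]]] .
  moreover have "dist E x y \<le> dist E y x" using conjunct2[OF dist_walk[OF walk_rev[OF s a(2)]]] .
  ultimately show ?thesis by simp
qed

lemma walk0: "walk E x 0 y \<Longrightarrow> x = y"
  by (erule walk.cases) simp_all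

lemma walk1: "walk E x 1 y \<Longrightarrow> E x y"
proof -
  assume "walk E x 1 y"
  then obtain y' n where a: "E x y'" "1 = Suc n" "walk E y' n y"
    unfolding walk.simps[of E x 1 y] by auto
  then have "walk E y' 0 y" by simp
  then have "y' = y" by (rule walk0)
  then show "E x y" using a by simp
qed

lemma dist0: "graph V E \<Longrightarrow> x \<in> V \<Longrightarrow> y \<in> V \<Longrightarrow> dist E x y = 0 \<Longrightarrow> x = y"
proof -
  assume a: "graph V E" "x \<in> V" "y \<in> V" "dist E x y = 0"
  obtain n where "walk E x n y" using conn[OF a(1) a(2) a(3)] by blast
  then have "walk E x (dist E x y) y" by (rule conjunct1[OF dist_walk])
  then show "x = y" using a(4) walk0 by (metis)
qed

lemma dist1: "graph V E \<Longrightarrow> x \<in> V \<Longrightarrow> y \<in> V \<Longrightarrow> dist E x y = 1 \<Longrightarrow> E x y"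
proof -
  assume a: "graph V E" "x \<in> V" "y \<in> V" "dist E x y = 1"
  obtain n where "walk E x n y" using conn[OF a(1) a(2) a(3)] by blast
  then have "walk E x (dist E x y) y" by (rule conjunct1[OF dist_walk])
  then show "E x y" using a(4) walk1 by (metis)
qed

lemma dist_self: "dist E x x = 0"
  using dist_walk[OF walk.walk_nil[of E x]] by simp

lemma edge_dist: "graph V E \<Longrightarrow> E x y \<Longrightarrow> dist E x y = 1"
proof -
  assume g: "graph V E" "E x y"
  have w: "walk E x 1 y" using g(2) by (rule walk_edge)
  have "x \<noteq> y" using g unfolding graph_def by blast
  have "x \<in> V" "y \<in> V" using g unfolding graph_def by blast+
  then have "dist E x y \<noteq> 0" using dist0[OF g(1)] \<open>x \<noteq> y\<close> by metis
  moreover have "dist E x y \<le> 1" using dist_walk[OF w] by (rule conjunct2)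
  ultimately show ?thesis by linarith
qed

lemma tri: "graph V E \<Longrightarrow> u \<in> V \<Longrightarrow> a \<in> V \<Longrightarrow> E a b \<Longrightarrow> dist E u b \<le> dist E u a + 1"
proof -
  assume g: "graph V E" "u \<in> V" "a \<in> V" "E a b"
  obtain n where "walk E u n a" using conn[OF g(1) g(2) g(3)] by blast
  then have "walk E u (dist E u a) a" by (rule conjunct1[OF dist_walk])
  moreover have "walk E a 1 b" using g(4) by (rule walk_edge)
  ultimately have "walk E u (dist E u a + 1) b" by (rule walk_append)
  then show ?thesis by (rule conjunct2[OF dist_walk])
qed

lemma clique:
  assumes g: "graph V E" and wb: "weakly_bridged V E"
    and V: "u \<in> V" "v \<in> V" "x \<in> V" "x' \<in> V"
    and e: "E x v" "E x' v"
    and d: "dist E u x = dist E u v - 1" "dist E u x' = dist E u v - 1"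
  shows "x = x' \<or> E x x'"
proof (rule ccontr)
  assume c: "\<not> (x = x' \<or> E x x')"
  have s: "\<forall>x y. E x y \<longrightarrow> E y x" and irr: "\<forall>x. \<not> E x x" using g unfolding graph_def by blast+
  define k where "k = dist E u v"
  have "k \<ge> 2"
  proof (rule ccontr)
    assume "\<not> k \<ge> 2"
    then have "dist E u x = 0" "dist E u x' = 0" using d k_def by auto
    then show False using dist0 g V c by metis
  qed
  have dxx: "dist E x x' = 2"
  proof -
    have "E v x'" using e s by blast
    then have "walk E v 1 x'" by (rule walk_edge)
    from walk.walk_step[OF e(1) this] have "walk E x 2 x'" by (simp add: numeral_2_eq_2)
    then have "dist E x x' \<le> 2" by (rule conjunct2[OF dist_walk])
    moreover have "dist E x x' \<noteq> 0" using dist0[OF g V(3,4)] c by blast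
    moreover have "dist E x x' \<noteq> 1" using dist1[OF g V(3,4)] c by blast
    ultimately show ?thesis by linarith
  qed
  obtain z where z: "z \<in> V" "E z x" "E z x'" "dist E u z = k - 2"
  proof (cases "k = 2")
    case True
    then have "dist E u x = 1" "dist E u x' = 1" using d k_def by simp_all
    then have ux: "E u x" "E u x'" using dist1[OF g V(1,3)] dist1[OF g V(1,4)] by blast+
    have "dist E u u = k - 2" using True dist_self[of E u] by simp
    then show ?thesis by (rule that[OF V(1) ux])
  next
    case False
    have qc: "QC V E" using wb unfolding weakly_bridged_def weakly_modular_def by blast
    have "dist E x v = 1" "dist E x' v = 1" using edge_dist[OF g e(1)] edge_dist[OF g e(2)] by blast+
    then have pre: "dist E x v = 1 \<and> dist E x' v = 1 \<and> 2 = dist E x x' \<and> dist E x x' \<le> dist E u x \<and>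
       dist E u x = dist E u x' \<and> dist E u x' = dist E u v - 1"
      using dxx d False \<open>k \<ge> 2\<close> k_def by simp
    have "\<exists>z\<in>V. E z x \<and> E z x' \<and> dist E u z = dist E u x - 1"
      using qc[unfolded QC_def, rule_format, OF V(1) V(3) V(4) V(2) pre] .
    then obtain z where zz: "z \<in> V" "E z x" "E z x'" "dist E u z = dist E u x - 1" by blast
    have "dist E u z = k - 2" using zz(4) d(1) k_def by simp
    then show ?thesis by (rule that[OF zz(1) zz(2) zz(3)])
  qed
  have "\<not> E v z"
  proof
    assume "E v z"
    then have "E z v" using s by blast
    then have "dist E u v \<le> dist E u z + 1" by (rule tri[OF g V(1) z(1)])
    then show False using z k_def \<open>k \<ge> 2\<close> by simp
  qed
  moreover have "v \<noteq> z" using z k_def \<open>k \<ge> 2\<close> by auto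
  moreover have "v \<noteq> x" "v \<noteq> x'" "x \<noteq> z" "x' \<noteq> z" using e z irr by auto
  moreover have "distinct [v, x, z, x']" using calculation c by simp
  moreover have "E v x" "E x z" "E z x'" "E x' v" using e z s by blast+
  ultimately have "\<exists>a\<in>V. \<exists>b\<in>V. \<exists>c\<in>V. \<exists>d\<in>V.
     distinct [a, b, c, d] \<and> E a b \<and> E b c \<and> E c d \<and> E d a \<and> \<not> E a c \<and> \<not> E b d"
    using V(2-4) z(1) c by (intro bexI[of _ v] bexI[of _ x] bexI[of _ z] bexI[of _ x']) simp_all
  then have "\<not> induced_C4_free V E" unfolding induced_C4_free_def by blast
  then show False using wb unfolding weakly_bridged_def by blast
qed

theorem lemma2:
  assumes "graph V E"
    and "weakly_bridged V E"
  shows "diamond_weakly_modular V E"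
proof -
  note g = assms(1) and wb = assms(2)
  have s: "\<forall>x y. E x y \<longrightarrow> E y x" using g unfolding graph_def by blast
  have qc: "QC V E" and tc: "TC V E" using wb unfolding weakly_bridged_def weakly_modular_def by blast+
  have "TDC V E" unfolding TDC_def
  proof (intro ballI impI)
    fix u v w assume V: "u \<in> V" "v \<in> V" "w \<in> V"
      and h: "1 = dist E v w \<and> dist E v w < dist E u v \<and> dist E u v = dist E u w"
    have "dist E v u = dist E u v" using dist_sym[OF g V(2) V(1)] .
    then obtain z where z: "z \<in> V" "E z v" "E z w" "dist E u z = dist E u v - 1"
      using tc[unfolded TC_def, rule_format, of u v w] V h by auto
    have dzw: "dist E u z = dist E u w - 1" using z h by simp
    show "\<exists>z\<in>V. E z v \<and> E z w \<and> dist E u z = dist E u v - 1 \<and>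
        (\<forall>x\<in>V. dist E x v = 1 \<and> dist E u x = dist E u v - 1 \<longrightarrow> x = z \<or> E z x) \<and>
        (\<forall>y\<in>V. dist E y w = 1 \<and> dist E u y = dist E u w - 1 \<longrightarrow> y = z \<or> E z y)"
    proof (intro bexI[of _ z] conjI ballI impI)
      fix x assume x: "x \<in> V" "dist E x v = 1 \<and> dist E u x = dist E u v - 1"
      have "E x v" using dist1[OF g x(1) V(2)] x(2) by blast
      then show "x = z \<or> E z x" using clique[OF g wb V(1,2) z(1) x(1) z(2) _ z(4)] x s by blast
    next
      fix y assume y: "y \<in> V" "dist E y w = 1 \<and> dist E u y = dist E u w - 1"
      have "E y w" using dist1[OF g y(1) V(3)] y(2) by blast
      then show "y = z \<or> E z y" using clique[OF g wb V(1,3) z(1) y(1) z(3) _ dzw] y s by blast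
    qed (use z in auto)
  qed
  then show ?thesis using qc unfolding diamond_weakly_modular_def by blast
qed

end
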